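(* There exists an NWBTS$(8;b)$ for every $b\ge0$ with $b\equiv 9,10,18,19,27,28,29,37,38,46,47\pmod{56}$.
   Context: A triple system TS$(v;b)$ is a pair $(V,\mathcal F)$, $V$ a set of $v\ge3$ points, $\mathcal F$ a multiset of $b$ 3-subsets (blocks). $\lambda_{x_1,\dots,x_j}$ is the number of blocks containing $\{x_1,\dots,x_j\}$; $j$-balanced means $|\lambda_{x_1,\dots,x_j}-\lambda_{y_1,\dots,y_j}|\le1$ for all $j$-subsets. Associated pair $(\lambda,\varepsilon)$ of $(v,b)$: integers with $3b=\lambda\binom v2+\varepsilon$, $-v/2<\varepsilon<v/2$. (C1): $v\equiv 2\pmod 3$ and $b\in\{\lfloor \lambda v(v-1)/6\rfloor,\lceil \lambda v(v-1)/6\rceil\}$ for an integer $\lambda$ with $\lambda\equiv1,2\pmod 3$ if $v\equiv5\pmod6$ and $\lambda\equiv 2,4\pmod 6$ if $v\equiv2\pmod 6$. (C2): $v$ even and $\lambda v(v-1)/6-v/6<b<\lambda v(v-1)/6+v/6$ for an odd integer $\lambda$. In both, $\lambda$ is that of the associated pair. Defect graph (when all $\lambda_{x,y}\in\{\lambda-1,\lambda,\lambda+1\}$): graph on $V$ with edges the pairs with $\lambda_{x,y}=\lambda+1$ (label $+1$) or $\lambda-1$ (label $-1$); isomorphisms preserve labels. $G_{\pm1}$: triangle with two $\pm1$ edges and one $\mp1$ edge; $G_{\pm2}$: 4-cycle with three $\pm1$ edges and one $\mp1$ edge. For even $v$: $H^0_{v,\varepsilon}$: perfect matching with $(v+2\varepsilon)/4$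 edges $+1$, $(v-2\varepsilon)/4$ edges $-1$; $H^1_{v,\varepsilon}$: disjoint union of a $K_{1,3}$ with two $+1$ and one $-1$ edge and a matching of the other $v-4$ vertices with $(v-6+2\varepsilon)/4$ edges $+1$, $(v-2-2\varepsilon)/4$ edges $-1$; $H^2_{v,\varepsilon}$: disjoint union of a $K_{1,3}$ with one $+1$ and two $-1$ edges and a matching of the other $v-4$ vertices with $(v-2+2\varepsilon)/4$ edges $+1$, $(v-6-2\varepsilon)/4$ edges $-1$. Nearly 2-balanced: all $\lambda_{x,y}\in\{\lambda-1,\lambda,\lambda+1\}$ and defect graph $\cong G_\varepsilon$ under (C1); under (C2) $\cong H^0_{v,\varepsilon}$ if $\varepsilon\equiv v/2\pmod 2$, else $\cong H^1_{v,\varepsilon}$ or $H^2_{v,\varepsilon}$. An NWBTS$(v;b)$ is a nearly 2-balanced, 3-balanced TS$(v;b)$ with $(v,b)$ in (C1) or (C2). (For $v=8$ the listed $b$ are exactly those for which $(8,b)$ satisfies (C1) or (C2).) *)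

theory Defs
  imports Complex_Main "HOL-Library.Multiset"
begin

definition TS :: "'a set \<Rightarrow> 'a set multiset \<Rightarrow> bool" where
  "TS V F \<longleftrightarrow> finite V \<and> card V \<ge> 3 \<and> (\<forall>B \<in># F. B \<subseteq> V \<and> card B = 3)"

definition lam :: "'a set multiset \<Rightarrow> 'a set \<Rightarrow> nat" where
  "lam F S = size (filter_mset (\<lambda>B. S \<subseteq> B) F)"

definition j_balanced :: "nat \<Rightarrow> 'a set \<Rightarrow> 'a set multiset \<Rightarrow> bool" where
  "j_balanced j V F \<longleftrightarrow>
     (\<forall>S T. S \<subseteq> V \<longrightarrow> T \<subseteq> V \<longrightarrow> card S = j \<longrightarrow> card T = j \<longrightarrow>
        \<bar>int (lam F S) - int (lam F T)\<bar> \<le> 1)"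

definition assoc_pair :: "nat \<Rightarrow> nat \<Rightarrow> int \<Rightarrow> int \<Rightarrow> bool" where
  "assoc_pair v b l e \<longleftrightarrow> 3 * int b = l * int (v choose 2) + e \<and>
      - real v / 2 < real_of_int e \<and> real_of_int e < real v / 2"

definition C1 :: "nat \<Rightarrow> nat \<Rightarrow> int \<Rightarrow> bool" where
  "C1 v b l \<longleftrightarrow> v mod 3 = 2 \<and>
     (int b = \<lfloor>real_of_int l * real v * (real v - 1) / 6\<rfloor> \<or>
      int b = \<lceil>real_of_int l * real v * (real v - 1) / 6\<rceil>) \<and>
     (v mod 6 = 5 \<longrightarrow> l mod 3 = 1 \<or> l mod 3 = 2) \<and>
     (v mod 6 = 2 \<longrightarrow> l mod 6 = 2 \<or> l mod 6 = 4)"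

definition C2 :: "nat \<Rightarrow> nat \<Rightarrow> int \<Rightarrow> bool" where
  "C2 v b l \<longleftrightarrow> even v \<and> odd l \<and>
     real_of_int l * real v * (real v - 1) / 6 - real v / 6 < real b \<and>
     real b < real_of_int l * real v * (real v - 1) / 6 + real v / 6"

text \<open>Labelled graphs are given by a vertex set and a symmetric label function
  (label 0 = no edge). Isomorphism = label-preserving bijection of vertex sets.\<close>
definition lab_iso :: "'a set \<Rightarrow> ('a \<Rightarrow> 'a \<Rightarrow> int) \<Rightarrow> 'b set \<Rightarrow> ('b \<Rightarrow> 'b \<Rightarrow> int) \<Rightarrow> bool" where
  "lab_iso V d W g \<longleftrightarrow> (\<exists>f. bij_betw f V W \<and>
      (\<forall>x\<in>V. \<forall>y\<in>V. x \<noteq> y \<longrightarrow> d x y = g (f x) (f y)))"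

definition defect :: "'a set multiset \<Rightarrow> int \<Rightarrow> 'a \<Rightarrow> 'a \<Rightarrow> int" where
  "defect F l x y = int (lam F {x, y}) - l"

definition elab :: "(nat \<times> nat \<times> int) list \<Rightarrow> nat \<Rightarrow> nat \<Rightarrow> int" where
  "elab E x y = sum_list (map (\<lambda>(a, b, s). if {a, b} = {x, y} then s else 0) E)"

text \<open>Matching on vertices s, s+1, ...: edges {s+2i, s+2i+1};
  the first p edges have label +1, the next q edges label -1.\<close>
definition mlab :: "nat \<Rightarrow> nat \<Rightarrow> nat \<Rightarrow> nat \<Rightarrow> nat \<Rightarrow> int" where
  "mlab s p q x y =
     (if x \<noteq> y \<and> s \<le> x \<and> s \<le> y \<and> (x - s) div 2 = (y - s) div 2 then
        (if (x - s) div 2 < p then 1 else if (x - s) div 2 < p + q then -1 else 0)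
      else 0)"

text \<open>G_{+1}, G_{-1}: triangle on 0,1,2; G_{+2}, G_{-2}: 4-cycle 0-1-2-3-0
  (the remaining vertices of {0..<v} are isolated).\<close>
definition Gmod :: "int \<Rightarrow> nat \<Rightarrow> nat \<Rightarrow> int" where
  "Gmod e =
     (if e = 1 then elab [(0,1,1),(1,2,1),(0,2,-1)]
      else if e = -1 then elab [(0,1,-1),(1,2,-1),(0,2,1)]
      else if e = 2 then elab [(0,1,1),(1,2,1),(2,3,1),(3,0,-1)]
      else if e = -2 then elab [(0,1,-1),(1,2,-1),(2,3,-1),(3,0,1)]
      else (\<lambda>x y. 0))"

definition H0 :: "nat \<Rightarrow> int \<Rightarrow> nat \<Rightarrow> nat \<Rightarrow> int" where
  "H0 v e = mlab 0 (nat ((int v + 2 * e) div 4)) (nat ((int v - 2 * e) div 4))"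

definition H1 :: "nat \<Rightarrow> int \<Rightarrow> nat \<Rightarrow> nat \<Rightarrow> int" where
  "H1 v e = (\<lambda>x y. elab [(0,1,1),(0,2,1),(0,3,-1)] x y +
       mlab 4 (nat ((int v - 6 + 2 * e) div 4)) (nat ((int v - 2 - 2 * e) div 4)) x y)"

definition H2 :: "nat \<Rightarrow> int \<Rightarrow> nat \<Rightarrow> nat \<Rightarrow> int" where
  "H2 v e = (\<lambda>x y. elab [(0,1,1),(0,2,-1),(0,3,-1)] x y +
       mlab 4 (nat ((int v - 2 + 2 * e) div 4)) (nat ((int v - 6 - 2 * e) div 4)) x y)"

definition pairs_near :: "'a set \<Rightarrow> 'a set multiset \<Rightarrow> int \<Rightarrow> bool" where
  "pairs_near V F l \<longleftrightarrow> (\<forall>x\<in>V. \<forall>y\<in>V. x \<noteq> y \<longrightarrow>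
      int (lam F {x, y}) \<in> {l - 1, l, l + 1})"

definition nearly_2bal_C1 :: "'a set \<Rightarrow> 'a set multiset \<Rightarrow> int \<Rightarrow> int \<Rightarrow> bool" where
  "nearly_2bal_C1 V F l e \<longleftrightarrow> pairs_near V F l \<and> e \<in> {-2, -1, 1, 2} \<and>
      lab_iso V (defect F l) {..<card V} (Gmod e)"

definition nearly_2bal_C2 :: "'a set \<Rightarrow> 'a set multiset \<Rightarrow> int \<Rightarrow> int \<Rightarrow> bool" where
  "nearly_2bal_C2 V F l e \<longleftrightarrow> pairs_near V F l \<and>
     (let v = card V in
      if e mod 2 = int (v div 2) mod 2 then lab_iso V (defect F l) {..<v} (H0 v e)
      else ((int v - 6 + 2 * e \<ge> 0 \<and> int v - 2 - 2 * e \<ge> 0 \<and>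
              lab_iso V (defect F l) {..<v} (H1 v e))
         \<or> (int v - 2 + 2 * e \<ge> 0 \<and> int v - 6 - 2 * e \<ge> 0 \<and>
              lab_iso V (defect F l) {..<v} (H2 v e))))"

definition NWBTS :: "'a set \<Rightarrow> 'a set multiset \<Rightarrow> bool" where
  "NWBTS V F \<longleftrightarrow> TS V F \<and> j_balanced 3 V F \<and>
     (\<exists>l e. assoc_pair (card V) (size F) l e \<and>
        ((C1 (card V) (size F) l \<and> nearly_2bal_C1 V F l e) \<or>
         (C2 (card V) (size F) l \<and> nearly_2bal_C2 V F l e)))"

end

theory Submission
  imports Defs
begin

definition AllT :: "nat set multiset" where
  "AllT = mset_set {B. B \<subseteq> {0..<8} \<and> card B = 3}"

definition cnt :: "nat list list \<Rightarrow> nat \<Rightarrow> nat \<Rightarrow> nat" where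
  "cnt L x y = length (filter (\<lambda>t. x \<in> set t \<and> y \<in> set t) L)"

definition chk :: "nat list list \<Rightarrow> int \<Rightarrow> (nat \<Rightarrow> nat \<Rightarrow> int) \<Rightarrow> bool" where
  "chk L lz g = list_all (\<lambda>x. list_all (\<lambda>y. x = y \<or> (int (cnt L x y) - lz = g x y \<and> g x y \<in> {-1,0,1})) [0..<8]) [0..<8]"

lemma lam_add: "lam (A + B) S = lam A S + lam B S"
  by (simp add: lam_def)

lemma lam_rep: "lam (repeat_mset k A) S = k * lam A S"
  by (induction k) (simp_all add: lam_add, simp add: lam_def)

lemma finT: "finite {B. B \<subseteq> {0..<(8::nat)} \<and> card B = 3}"
  by simp

lemma size_AllT: "size AllT = 56"
proof -
  have "card {B. B \<subseteq> {0..<(8::nat)} \<and> card B = 3} = 8 choose 3"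
    using n_subsets[of "{0..<(8::nat)}" 3] by simp
  also have "(8::nat) choose 3 = 56" by code_simp
  finally show ?thesis unfolding AllT_def by simp
qed

lemma lam_AllT2:
  assumes "x \<in> {0..<8}" "y \<in> {0..<8}" "x \<noteq> y"
  shows "lam AllT {x,y} = 6"
proof -
  let ?V = "{0..<(8::nat)}"
  have eq: "{B \<in> {B. B \<subseteq> ?V \<and> card B = 3}. {x,y} \<subseteq> B} = (\<lambda>z. insert z {x,y}) ` (?V - {x,y})"
  proof
    show "{B \<in> {B. B \<subseteq> ?V \<and> card B = 3}. {x,y} \<subseteq> B} \<subseteq> (\<lambda>z. insert z {x,y}) ` (?V - {x,y})"
    proof
      fix B assume B: "B \<in> {B \<in> {B. B \<subseteq> ?V \<and> card B = 3}. {x,y} \<subseteq> B}"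
      hence fB: "finite B" using finite_subset by auto
      have "card (B - {x,y}) = 1" using B assms(3) fB by (simp add: card_Diff_subset)
      then obtain z where z: "B - {x,y} = {z}" by (meson card_1_singletonE)
      hence "B = insert z {x,y}" using B by blast
      moreover have "z \<in> ?V - {x,y}" using z B by blast
      ultimately show "B \<in> (\<lambda>z. insert z {x,y}) ` (?V - {x,y})" by blast
    qed
  next
    show "(\<lambda>z. insert z {x,y}) ` (?V - {x,y}) \<subseteq> {B \<in> {B. B \<subseteq> ?V \<and> card B = 3}. {x,y} \<subseteq> B}"
      using assms by auto
  qed
  have inj: "inj_on (\<lambda>z. insert z {x,y}) (?V - {x,y})"
    by (auto simp: inj_on_def)
  have "card (?V - {x,y}) = 6" using assms by (simp add: card_Diff_subset)
  hence "card ((\<lambda>z. insert z {x,y}) ` (?V - {x,y})) = 6" using card_image[OF inj] by simp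
  thus ?thesis unfolding lam_def AllT_def using eq by simp
qed

lemma lam_AllT3:
  assumes "S \<subseteq> {0..<8}" "card S = 3"
  shows "lam AllT S = 1"
proof -
  let ?V = "{0..<(8::nat)}"
  have "{B \<in> {B. B \<subseteq> ?V \<and> card B = 3}. S \<subseteq> B} = {S}"
  proof
    show "{B \<in> {B. B \<subseteq> ?V \<and> card B = 3}. S \<subseteq> B} \<subseteq> {S}"
    proof
      fix B assume B: "B \<in> {B \<in> {B. B \<subseteq> ?V \<and> card B = 3}. S \<subseteq> B}"
      have Bs: "B \<subseteq> ?V" "card B = 3" "S \<subseteq> B" using B by auto
      have fB: "finite B" using Bs(1) finite_subset by blast
      have "S = B" using card_subset_eq[OF fB Bs(3)] Bs(2) assms(2) by simp
      thus "B \<in> {S}" by simp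
    qed
  next
    show "{S} \<subseteq> {B \<in> {B. B \<subseteq> ?V \<and> card B = 3}. S \<subseteq> B}"
      using assms by simp
  qed
  thus ?thesis unfolding lam_def AllT_def by simp
qed

lemma lam_L: "lam (mset (map set L)) S = length (filter (\<lambda>t. S \<subseteq> set t) L)"
  unfolding lam_def by (induction L) auto

lemma lam_L2: "lam (mset (map set L)) {x,y} = cnt L x y"
  unfolding lam_L cnt_def by simp

lemma lam_L3:
  assumes wf: "list_all (\<lambda>t. length t = 3 \<and> distinct t \<and> set t \<subseteq> {0..<8}) L"
    and dist: "distinct (map set L)" and S: "card S = 3"
  shows "lam (mset (map set L)) S \<le> 1"
proof -
  have c3: "card B = 3" if "B \<in># mset (map set L)" for B
  proof -
    have "B \<in> set ` set L" using that by simp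
    then obtain t where t: "t \<in> set L" "B = set t" by blast
    have "length t = 3 \<and> distinct t" using wf t(1) unfolding list_all_iff by blast
    thus ?thesis using t(2) distinct_card by metis
  qed
  have eqv: "(S \<subseteq> B) = (B = S)" if "B \<in># mset (map set L)" for B
  proof
    assume sub: "S \<subseteq> B"
    have cB: "card B = 3" using c3[OF that] .
    have fB: "finite B"
    proof (rule ccontr)
      assume "infinite B" hence "card B = 0" by simp
      with cB show False by simp
    qed
    show "B = S" using card_subset_eq[OF fB sub] cB S by simp
  qed simp
  have "filter_mset (\<lambda>B. S \<subseteq> B) (mset (map set L)) = filter_mset (\<lambda>B. B = S) (mset (map set L))"
    using eqv by (rule filter_mset_cong[OF refl])
  hence "lam (mset (map set L)) S = count (mset (map set L)) S"
    unfolding lam_def by (simp add: filter_eq_replicate_mset)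
  also have "count (mset (map set L)) S = (if S \<in> set (map set L) then 1 else 0)"
    using dist distinct_count_atmost_1 by metis
  finally show ?thesis by simp
qed

lemma gen:
  fixes L :: "nat list list"
  assumes wf: "list_all (\<lambda>t. length t = 3 \<and> distinct t \<and> set t \<subseteq> {0..<8}) L"
    and dist: "distinct (map set L)"
  shows "TS {0..<8} (mset (map set L) + repeat_mset k AllT)"
    and "j_balanced 3 {0..<8} (mset (map set L) + repeat_mset k AllT)"
    and "size (mset (map set L) + repeat_mset k AllT) = length L + 56 * k"
    and "\<And>x y. x \<in> {0..<8} \<Longrightarrow> y \<in> {0..<8} \<Longrightarrow> x \<noteq> y \<Longrightarrow>
           lam (mset (map set L) + repeat_mset k AllT) {x,y} = cnt L x y + 6 * k"
proof -
  let ?F = "mset (map set L) + repeat_mset k AllT"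
  show "TS {0..<8} ?F"
    unfolding TS_def
  proof (intro conjI)
    show "\<forall>B\<in>#?F. B \<subseteq> {0..<8} \<and> card B = 3"
    proof
    fix B assume "B \<in># ?F"
    hence "B \<in># mset (map set L) \<or> B \<in># repeat_mset k AllT" by simp
    hence "B \<in># mset (map set L) \<or> B \<in># AllT"
      by (metis count_repeat_mset mult_0_right not_in_iff)
    thus "B \<subseteq> {0..<8} \<and> card B = 3"
    proof
      assume "B \<in># mset (map set L)"
      hence "B \<in> set ` set L" by simp
      then obtain t where t: "t \<in> set L" "B = set t" by blast
      have "length t = 3 \<and> distinct t \<and> set t \<subseteq> {0..<8}" using wf t(1) unfolding list_all_iff by blast
      thus ?thesis using t(2) distinct_card by metis
    next
      assume "B \<in># AllT"
      thus ?thesis unfolding AllT_def by simp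
    qed
    qed
  qed auto
  show "j_balanced 3 {0..<8} ?F"
    unfolding j_balanced_def
  proof (intro allI impI)
    fix S T :: "nat set" assume a: "S \<subseteq> {0..<8}" "T \<subseteq> {0..<8}" "card S = 3" "card T = 3"
    have "lam ?F S = lam (mset (map set L)) S + k" "lam ?F T = lam (mset (map set L)) T + k"
      using a lam_AllT3 by (simp_all add: lam_add lam_rep)
    moreover have "lam (mset (map set L)) S \<le> 1" "lam (mset (map set L)) T \<le> 1"
      using lam_L3[OF wf dist] a by auto
    ultimately show "\<bar>int (lam ?F S) - int (lam ?F T)\<bar> \<le> 1" by simp
  qed
  show "size ?F = length L + 56 * k" by (simp add: size_AllT)
  show "\<And>x y. x \<in> {0..<8} \<Longrightarrow> y \<in> {0..<8} \<Longrightarrow> x \<noteq> y \<Longrightarrow> lam ?F {x,y} = cnt L x y + 6 * k"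
  proof -
    fix x y :: nat assume a: "x \<in> {0..<8}" "y \<in> {0..<8}" "x \<noteq> y"
    have "lam ?F {x,y} = lam (mset (map set L)) {x,y} + k * lam AllT {x,y}"
      by (simp only: lam_add lam_rep)
    also have "\<dots> = cnt L x y + k * 6" by (simp only: lam_L2 lam_AllT2[OF a])
    finally show "lam ?F {x,y} = cnt L x y + 6 * k" by simp
  qed
qed

lemma chkD:
  assumes "chk L lz g" "x \<in> {0..<8}" "y \<in> {0..<8}" "x \<noteq> y"
  shows "int (cnt L x y) - lz = g x y \<and> g x y \<in> {-1,0,1}"
proof -
  have h: "\<forall>x\<in>{0..<8}. \<forall>y\<in>{0..<8}. x = y \<or> (int (cnt L x y) - lz = g x y \<and> g x y \<in> {-1,0,1})"
    using assms(1) unfolding chk_def list_all_iff set_upt .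
  show ?thesis using bspec[OF bspec[OF h assms(2)] assms(3)] assms(4) by blast
qed

lemma iso:
  assumes wf: "list_all (\<lambda>t. length t = 3 \<and> distinct t \<and> set t \<subseteq> {0..<8}) L"
    and dist: "distinct (map set L)" and c: "chk L lz g"
  shows "lab_iso {0..<8} (defect (mset (map set L) + repeat_mset k AllT) (lz + 6 * int k)) {..<8} g"
    and "pairs_near {0..<8} (mset (map set L) + repeat_mset k AllT) (lz + 6 * int k)"
proof -
  have d: "defect (mset (map set L) + repeat_mset k AllT) (lz + 6 * int k) x y = g x y \<and> g x y \<in> {-1,0,1}"
    if "x \<in> {0..<8}" "y \<in> {0..<8}" "x \<noteq> y" for x y
    using gen(4)[OF wf dist that] chkD[OF c that] unfolding defect_def by simp
  show "lab_iso {0..<8} (defect (mset (map set L) + repeat_mset k AllT) (lz + 6 * int k)) {..<8} g"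
    unfolding lab_iso_def
    by (rule exI[of _ id]) (use d in \<open>auto simp: bij_betw_def\<close>)
  show "pairs_near {0..<8} (mset (map set L) + repeat_mset k AllT) (lz + 6 * int k)"
    unfolding pairs_near_def using d unfolding defect_def by fastforce
qed

lemma real_shift:
  "real_of_int (lz + 6 * int k) * real (8::nat) * (real (8::nat) - 1) / 6
     = real_of_int lz * 56 / 6 + real_of_int (56 * int k)"
  by (simp add: algebra_simps)

lemma caseC2:
  fixes L :: "nat list list"
  assumes wf: "list_all (\<lambda>t. length t = 3 \<and> distinct t \<and> set t \<subseteq> {0..<8}) L"
    and dist: "distinct (map set L)" and len: "length L = r" and c: "chk L lz g"
    and ap: "3 * int r = 28 * lz + e" "-4 < e" "e < 4" and od: "odd lz"
    and lo: "real_of_int lz * 56 / 6 - 8 / 6 < real r"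
    and hi: "real r < real_of_int lz * 56 / 6 + 8 / 6"
    and gc: "if e mod 2 = 0 then g = H0 8 e
             else ((8 - 6 + 2 * e \<ge> 0 \<and> 8 - 2 - 2 * e \<ge> 0 \<and> g = H1 8 e)
                 \<or> (8 - 2 + 2 * e \<ge> 0 \<and> 8 - 6 - 2 * e \<ge> 0 \<and> g = H2 8 e))"
  shows "\<exists>F. size F = r + 56 * k \<and> NWBTS {0..<8::nat} F"
proof -
  let ?F = "mset (map set L) + repeat_mset k AllT"
  let ?l = "lz + 6 * int k"
  have sz: "size ?F = r + 56 * k" using gen(3)[OF wf dist, of k] len by simp
  have cv: "card {0..<8::nat} = 8" by simp
  have "assoc_pair 8 (r + 56 * k) ?l e"
    unfolding assoc_pair_def using ap by (simp add: choose_two algebra_simps)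
  moreover have "C2 8 (r + 56 * k) ?l"
    unfolding C2_def real_shift using od lo hi by simp
  moreover have "nearly_2bal_C2 {0..<8} ?F ?l e"
  proof -
    have iso: "lab_iso {0..<8} (defect ?F ?l) {..<8} g" and pn: "pairs_near {0..<8} ?F ?l"
      using iso[OF wf dist c, of k] by auto
    show ?thesis unfolding nearly_2bal_C2_def Let_def cv
      using gc iso pn by (auto split: if_splits)
  qed
  ultimately have "NWBTS {0..<8} ?F"
    unfolding NWBTS_def cv sz using gen(1,2)[OF wf dist] by blast
  thus ?thesis using sz by blast
qed

lemma caseC1:
  fixes L :: "nat list list"
  assumes wf: "list_all (\<lambda>t. length t = 3 \<and> distinct t \<and> set t \<subseteq> {0..<8}) L"
    and dist: "distinct (map set L)" and len: "length L = r" and c: "chk L lz (Gmod e)"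
    and ap: "3 * int r = 28 * lz + e" "-4 < e" "e < 4" and lm: "lz mod 6 = 2 \<or> lz mod 6 = 4"
    and fl: "int r = \<lfloor>real_of_int lz * 56 / 6\<rfloor> \<or> int r = \<lceil>real_of_int lz * 56 / 6\<rceil>"
    and ee: "e \<in> {-2, -1, 1, 2}"
  shows "\<exists>F. size F = r + 56 * k \<and> NWBTS {0..<8::nat} F"
proof -
  let ?F = "mset (map set L) + repeat_mset k AllT"
  let ?l = "lz + 6 * int k"
  have sz: "size ?F = r + 56 * k" using gen(3)[OF wf dist, of k] len by simp
  have cv: "card {0..<8::nat} = 8" by simp
  have "assoc_pair 8 (r + 56 * k) ?l e"
    unfolding assoc_pair_def using ap by (simp add: choose_two algebra_simps)
  moreover have "C1 8 (r + 56 * k) ?l"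
  proof -
    have m: "?l mod 6 = lz mod 6" by simp
    define x where "x = real_of_int lz * 56 / 6"
    have f: "\<lfloor>x + real_of_int (56 * int k)\<rfloor> = \<lfloor>x\<rfloor> + 56 * int k"
      by (rule floor_add_int[symmetric])
    have g: "\<lceil>x + real_of_int (56 * int k)\<rceil> = \<lceil>x\<rceil> + 56 * int k"
      by (rule ceiling_add_of_int)
    have A: "int (r + 56 * k) = \<lfloor>x + real_of_int (56 * int k)\<rfloor> \<or>
             int (r + 56 * k) = \<lceil>x + real_of_int (56 * int k)\<rceil>"
    proof -
      have fl': "int r = \<lfloor>x\<rfloor> \<or> int r = \<lceil>x\<rceil>" using fl unfolding x_def .
      have e: "int (r + 56 * k) = int r + 56 * int k" by simp
      show ?thesis unfolding e f g using fl' by linarith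
    qed
    have n: "(8::nat) mod 3 = 2" "\<not> (8::nat) mod 6 = 5" by simp_all
    show ?thesis unfolding C1_def real_shift m x_def[symmetric] using lm A n by blast
  qed
  moreover have "nearly_2bal_C1 {0..<8} ?F ?l e"
    unfolding nearly_2bal_C1_def cv using iso[OF wf dist c, of k] ee by auto
  ultimately have "NWBTS {0..<8} ?F"
    unfolding NWBTS_def cv sz using gen(1,2)[OF wf dist] by blast
  thus ?thesis using sz by blast
qed

definition L9 :: "nat list list" where "L9 = [[0,1,2],[0,1,4],[0,2,6],[0,5,7],[1,3,7],[1,5,6],[2,3,5],[2,4,7],[3,4,6]]"

lemma c9: "\<exists>F. size F = 9 + 56 * k \<and> NWBTS {0..<8::nat} F"
proof (rule caseC2[where L = L9 and r = 9 and lz = 1 and e = "-1" and g = "H1 8 (-1)"])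
  show "list_all (\<lambda>t. length t = 3 \<and> distinct t \<and> set t \<subseteq> {0..<8}) L9" by code_simp
  show "distinct (map set L9)" by code_simp
  show "chk L9 1 (H1 8 (-1))" by code_simp
qed (simp_all add: L9_def)

definition L10 :: "nat list list" where "L10 = [[0,1,2],[0,1,3],[0,4,6],[0,5,7],[1,4,7],[1,5,6],[2,3,6],[2,3,7],[2,4,5],[3,4,5]]"

lemma c10: "\<exists>F. size F = 10 + 56 * k \<and> NWBTS {0..<8::nat} F"
proof (rule caseC2[where L = L10 and r = 10 and lz = 1 and e = "2" and g = "H0 8 (2)"])
  show "list_all (\<lambda>t. length t = 3 \<and> distinct t \<and> set t \<subseteq> {0..<8}) L10" by code_simp
  show "distinct (map set L10)" by code_simp
  show "chk L10 1 (H0 8 (2))" by code_simp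
qed (simp_all add: L10_def)

definition L18 :: "nat list list" where "L18 = [[0,1,2],[0,2,3],[0,3,4],[0,3,5],[0,4,6],[0,5,7],[0,6,7],[1,3,6],[1,3,7],[1,4,5],[1,4,6],[1,5,7],[2,4,5],[2,4,7],[2,5,6],[2,6,7],[3,4,7],[3,5,6]]"

lemma c18: "\<exists>F. size F = 18 + 56 * k \<and> NWBTS {0..<8::nat} F"
proof (rule caseC1[where L = L18 and r = 18 and lz = 2 and e = "-2"])
  show "list_all (\<lambda>t. length t = 3 \<and> distinct t \<and> set t \<subseteq> {0..<8}) L18" by code_simp
  show "distinct (map set L18)" by code_simp
  show "chk L18 2 (Gmod (-2))" by code_simp
qed (simp_all add: L18_def)

definition L19 :: "nat list list" where "L19 = [[0,1,2],[0,1,3],[0,1,4],[0,3,4],[0,5,6],[0,5,7],[0,6,7],[1,2,5],[1,2,6],[1,3,5],[1,4,7],[1,6,7],[2,3,6],[2,3,7],[2,4,5],[2,4,7],[3,4,6],[3,5,7],[4,5,6]]"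

lemma c19: "\<exists>F. size F = 19 + 56 * k \<and> NWBTS {0..<8::nat} F"
proof (rule caseC1[where L = L19 and r = 19 and lz = 2 and e = "1"])
  show "list_all (\<lambda>t. length t = 3 \<and> distinct t \<and> set t \<subseteq> {0..<8}) L19" by code_simp
  show "distinct (map set L19)" by code_simp
  show "chk L19 2 (Gmod (1))" by code_simp
qed (simp_all add: L19_def)

definition L27 :: "nat list list" where "L27 = [[0,1,2],[0,1,3],[0,1,4],[0,1,5],[0,2,3],[0,4,6],[0,4,7],[0,5,6],[0,5,7],[0,6,7],[1,2,4],[1,2,6],[1,3,5],[1,3,7],[1,4,6],[1,5,7],[1,6,7],[2,3,6],[2,3,7],[2,4,5],[2,4,7],[2,5,6],[2,5,7],[3,4,5],[3,4,6],[3,4,7],[3,5,6]]"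

lemma c27: "\<exists>F. size F = 27 + 56 * k \<and> NWBTS {0..<8::nat} F"
proof (rule caseC2[where L = L27 and r = 27 and lz = 3 and e = "-3" and g = "H2 8 (-3)"])
  show "list_all (\<lambda>t. length t = 3 \<and> distinct t \<and> set t \<subseteq> {0..<8}) L27" by code_simp
  show "distinct (map set L27)" by code_simp
  show "chk L27 3 (H2 8 (-3))" by code_simp
qed (simp_all add: L27_def)

definition L28 :: "nat list list" where "L28 = [[0,1,2],[0,1,3],[0,1,4],[0,1,5],[0,2,3],[0,2,4],[0,3,6],[0,4,7],[0,5,6],[0,5,7],[0,6,7],[1,2,3],[1,2,6],[1,3,7],[1,4,5],[1,4,6],[1,5,7],[1,6,7],[2,3,5],[2,3,7],[2,4,6],[2,4,7],[2,5,6],[2,5,7],[3,4,5],[3,4,6],[3,4,7],[3,5,6]]"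

lemma c28: "\<exists>F. size F = 28 + 56 * k \<and> NWBTS {0..<8::nat} F"
proof (rule caseC2[where L = L28 and r = 28 and lz = 3 and e = "0" and g = "H0 8 (0)"])
  show "list_all (\<lambda>t. length t = 3 \<and> distinct t \<and> set t \<subseteq> {0..<8}) L28" by code_simp
  show "distinct (map set L28)" by code_simp
  show "chk L28 3 (H0 8 (0))" by code_simp
qed (simp_all add: L28_def)

definition L29 :: "nat list list" where "L29 = [[0,1,2],[0,1,3],[0,1,4],[0,1,5],[0,2,3],[0,2,4],[0,2,6],[0,4,7],[0,5,6],[0,5,7],[0,6,7],[1,2,3],[1,2,6],[1,3,7],[1,4,5],[1,4,6],[1,5,7],[1,6,7],[2,3,5],[2,4,5],[2,4,7],[2,5,7],[2,6,7],[3,4,5],[3,4,6],[3,4,7],[3,5,6],[3,6,7],[4,5,6]]"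

lemma c29: "\<exists>F. size F = 29 + 56 * k \<and> NWBTS {0..<8::nat} F"
proof (rule caseC2[where L = L29 and r = 29 and lz = 3 and e = "3" and g = "H1 8 (3)"])
  show "list_all (\<lambda>t. length t = 3 \<and> distinct t \<and> set t \<subseteq> {0..<8}) L29" by code_simp
  show "distinct (map set L29)" by code_simp
  show "chk L29 3 (H1 8 (3))" by code_simp
qed (simp_all add: L29_def)

definition L37 :: "nat list list" where "L37 = [[0,1,2],[0,1,3],[0,1,4],[0,2,3],[0,2,4],[0,2,5],[0,2,6],[0,3,5],[0,3,7],[0,4,6],[0,4,7],[0,5,6],[0,5,7],[0,6,7],[1,2,3],[1,2,7],[1,3,5],[1,3,6],[1,4,5],[1,4,6],[1,4,7],[1,5,6],[1,5,7],[1,6,7],[2,3,4],[2,3,6],[2,4,5],[2,4,7],[2,5,6],[2,5,7],[2,6,7],[3,4,5],[3,4,6],[3,4,7],[3,5,7],[3,6,7],[4,5,6]]"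

lemma c37: "\<exists>F. size F = 37 + 56 * k \<and> NWBTS {0..<8::nat} F"
proof (rule caseC1[where L = L37 and r = 37 and lz = 4 and e = "-1"])
  show "list_all (\<lambda>t. length t = 3 \<and> distinct t \<and> set t \<subseteq> {0..<8}) L37" by code_simp
  show "distinct (map set L37)" by code_simp
  show "chk L37 4 (Gmod (-1))" by code_simp
qed (simp_all add: L37_def)

definition L38 :: "nat list list" where "L38 = [[0,1,2],[0,1,3],[0,1,4],[0,1,5],[0,1,6],[0,2,3],[0,2,4],[0,2,5],[0,3,7],[0,4,6],[0,4,7],[0,5,6],[0,5,7],[0,6,7],[1,2,3],[1,2,4],[1,2,6],[1,2,7],[1,3,4],[1,3,5],[1,4,7],[1,5,6],[1,5,7],[1,6,7],[2,3,5],[2,3,6],[2,3,7],[2,4,5],[2,4,6],[2,5,7],[2,6,7],[3,4,5],[3,4,6],[3,4,7],[3,5,6],[3,6,7],[4,5,6],[4,5,7]]"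

lemma c38: "\<exists>F. size F = 38 + 56 * k \<and> NWBTS {0..<8::nat} F"
proof (rule caseC1[where L = L38 and r = 38 and lz = 4 and e = "2"])
  show "list_all (\<lambda>t. length t = 3 \<and> distinct t \<and> set t \<subseteq> {0..<8}) L38" by code_simp
  show "distinct (map set L38)" by code_simp
  show "chk L38 4 (Gmod (2))" by code_simp
qed (simp_all add: L38_def)

definition L46 :: "nat list list" where "L46 = [[0,1,2],[0,1,3],[0,1,4],[0,1,5],[0,1,6],[0,1,7],[0,2,3],[0,2,4],[0,2,5],[0,2,6],[0,3,4],[0,3,5],[0,3,7],[0,4,6],[0,4,7],[0,5,6],[0,5,7],[0,6,7],[1,2,3],[1,2,4],[1,2,5],[1,2,7],[1,3,4],[1,3,5],[1,3,6],[1,4,6],[1,4,7],[1,5,6],[1,5,7],[1,6,7],[2,3,6],[2,3,7],[2,4,5],[2,4,6],[2,4,7],[2,5,6],[2,5,7],[2,6,7],[3,4,5],[3,4,6],[3,4,7],[3,5,6],[3,5,7],[3,6,7],[4,5,6],[4,5,7]]"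

lemma c46: "\<exists>F. size F = 46 + 56 * k \<and> NWBTS {0..<8::nat} F"
proof (rule caseC2[where L = L46 and r = 46 and lz = 5 and e = "-2" and g = "H0 8 (-2)"])
  show "list_all (\<lambda>t. length t = 3 \<and> distinct t \<and> set t \<subseteq> {0..<8}) L46" by code_simp
  show "distinct (map set L46)" by code_simp
  show "chk L46 5 (H0 8 (-2))" by code_simp
qed (simp_all add: L46_def)

definition L47 :: "nat list list" where "L47 = [[0,1,2],[0,1,3],[0,1,4],[0,1,5],[0,1,6],[0,1,7],[0,2,3],[0,2,4],[0,2,5],[0,2,6],[0,2,7],[0,3,4],[0,3,6],[0,4,5],[0,4,7],[0,5,6],[0,5,7],[0,6,7],[1,2,3],[1,2,4],[1,2,6],[1,2,7],[1,3,4],[1,3,5],[1,3,7],[1,4,5],[1,4,6],[1,5,6],[1,5,7],[1,6,7],[2,3,5],[2,3,6],[2,3,7],[2,4,5],[2,4,6],[2,4,7],[2,5,6],[2,5,7],[3,4,5],[3,4,6],[3,4,7],[3,5,6],[3,5,7],[3,6,7],[4,5,6],[4,5,7],[4,6,7]]"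

lemma c47: "\<exists>F. size F = 47 + 56 * k \<and> NWBTS {0..<8::nat} F"
proof (rule caseC2[where L = L47 and r = 47 and lz = 5 and e = "1" and g = "H1 8 (1)"])
  show "list_all (\<lambda>t. length t = 3 \<and> distinct t \<and> set t \<subseteq> {0..<8}) L47" by code_simp
  show "distinct (map set L47)" by code_simp
  show "chk L47 5 (H1 8 (1))" by code_simp
qed (simp_all add: L47_def)

theorem lemmaA3:
  fixes b :: nat
  assumes "b mod 56 \<in> {9, 10, 18, 19, 27, 28, 29, 37, 38, 46, 47}"
  shows "\<exists>(V :: nat set) (F :: nat set multiset). card V = 8 \<and> size F = b \<and> NWBTS V F"
proof -
  define k where "k = b div 56"
  have b: "b = b mod 56 + 56 * k" unfolding k_def by simp
  have "\<exists>F. size F = b mod 56 + 56 * k \<and> NWBTS {0..<8::nat} F"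
    using assms c9[of k] c10[of k] c18[of k] c19[of k] c27[of k] c28[of k] c29[of k] c37[of k] c38[of k] c46[of k] c47[of k] by auto
  then obtain F where F: "size F = b mod 56 + 56 * k" "NWBTS {0..<8::nat} F" by blast
  show ?thesis
    by (rule exI[of _ "{0..<8::nat}"], rule exI[of _ F]) (use F b in simp)
qed

end
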